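(* Let $B$ be a finite set of closed, bounded line segments in $\mathbb{R}^2$ and let $R(B)=\{p\in\mathbb{R}^2: \text{every line through } p \text{ intersects } B\}$. If a maximal region of $R(B)$ is a line segment, then that line segment is contained in $B$ (i.e., in the union of the segments of $B$).
   Context: A region is a bounded, closed, connected subset of $\mathbb{R}^2$. For a set $P\subseteq\mathbb{R}^2$, a maximal region of $P$ is a region $R$ such that for every point $p\in R$ there is an open ball $A$ centered at $p$ with $A\cap R = A\cap P$. A line intersects $B$ if it meets at least one segment of $B$. *)

theory Defs
  imports "HOL-Analysis.Analysis"
begin

definition line_dir :: "real^2 \<Rightarrow> real^2 \<Rightarrow> (real^2) set" where
  "line_dir p d = {p + t *\<^sub>R d | t. True}"

definition is_segment :: "(real^2) set \<Rightarrow> bool" where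
  "is_segment S \<longleftrightarrow> (\<exists>a b. S = closed_segment a b)"

definition line_meets :: "(real^2) set \<Rightarrow> (real^2) set set \<Rightarrow> bool" where
  "line_meets L B \<longleftrightarrow> (\<exists>S\<in>B. L \<inter> S \<noteq> {})"

definition RB :: "(real^2) set set \<Rightarrow> (real^2) set" where
  "RB B = {p. \<forall>d. d \<noteq> 0 \<longrightarrow> line_meets (line_dir p d) B}"

definition region :: "(real^2) set \<Rightarrow> bool" where
  "region R \<longleftrightarrow> bounded R \<and> closed R \<and> connected R"

definition maximal_region :: "(real^2) set \<Rightarrow> (real^2) set \<Rightarrow> bool" where
  "maximal_region P R \<longleftrightarrow> region R \<and>
     (\<forall>p\<in>R. \<exists>e>0. ball p e \<inter> R = ball p e \<inter> P)"

end

theory Submission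
  imports Defs
begin

definition perp :: "real^2 \<Rightarrow> real^2" where
  "perp u = vector [- (u$2), u$1]"

lemma perp_inner: "u \<bullet> perp u = 0" "perp u \<bullet> u = 0" "perp u \<bullet> perp u = u \<bullet> u"
  by (simp_all add: perp_def inner_vec_def sum_2 vector_2 algebra_simps)

lemma perp_decomp: "(u \<bullet> u) *\<^sub>R v = (v \<bullet> u) *\<^sub>R u + (v \<bullet> perp u) *\<^sub>R perp u"
  by (simp add: perp_def vec_eq_iff forall_2 inner_vec_def sum_2 vector_2 algebra_simps)

lemma seg_zero_iff:
  fixes f :: "real^2 \<Rightarrow> real"
  assumes aff: "\<And>t. f ((1-t) *\<^sub>R x + t *\<^sub>R y) = (1-t) * f x + t * f y"
  shows "(\<exists>w\<in>closed_segment x y. f w = 0) \<longleftrightarrow> f x * f y \<le> 0"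
proof
  assume "\<exists>w\<in>closed_segment x y. f w = 0"
  then obtain t where t: "0 \<le> t" "t \<le> 1" "(1-t) * f x + t * f y = 0"
    using aff by (auto simp: in_segment)
  show "f x * f y \<le> 0"
  proof (rule ccontr)
    assume "\<not> f x * f y \<le> 0"
    hence "(f x > 0 \<and> f y > 0) \<or> (f x < 0 \<and> f y < 0)"
      by (metis not_le zero_less_mult_iff)
    thus False
    proof
      assume h: "f x > 0 \<and> f y > 0"
      have "(1-t) * f x \<ge> 0" "t * f y \<ge> 0" using t h by auto
      moreover have "(1-t) * f x > 0 \<or> t * f y > 0" using t h
        by (cases "t = 1") auto
      ultimately show False using t by linarith
    next
      assume h: "f x < 0 \<and> f y < 0"
      have "(1-t) * f x \<le> 0" "t * f y \<le> 0" using t h by (auto simp: mult_nonneg_nonpos)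
      moreover have "(1-t) * f x < 0 \<or> t * f y < 0" using t h
        by (cases "t = 1") (auto simp: mult_pos_neg)
      ultimately show False using t by linarith
    qed
  qed
next
  assume h: "f x * f y \<le> 0"
  show "\<exists>w\<in>closed_segment x y. f w = 0"
  proof (cases "f x = f y")
    case True
    hence "f x = 0" using h by (metis mult_le_0_iff order_antisym_conv)
    thus ?thesis by (intro bexI[of _ x]) auto
  next
    case False
    define t where "t = f x / (f x - f y)"
    have d: "f x - f y \<noteq> 0" using False by simp
    have "0 \<le> t \<and> t \<le> 1"
      using h d unfolding t_def
      by (auto simp: mult_le_0_iff divide_simps split: if_splits)
    moreover have "(1-t) * f x + t * f y = 0"
      using d unfolding t_def by (simp add: field_simps)
    ultimately show ?thesis using aff
      by (intro bexI[of _ "(1-t) *\<^sub>R x + t *\<^sub>R y"]) (auto simp: in_segment)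
  qed
qed

lemma sign_lemma:
  fixes A1 A2 B1 B2 :: real
  assumes "A1 * A2 > 0" "B1 * B2 > 0" "(A1 + B1) * (A2 + B2) \<le> 0"
  shows "A1 * B1 < 0"
  using assms by (auto simp: zero_less_mult_iff mult_le_0_iff mult_less_0_iff)

lemma between_lemma:
  fixes Y c1 c2 M :: real
  assumes "(Y - c1) * (Y - c2) < 0" "\<bar>c1\<bar> \<le> M" "\<bar>c2\<bar> \<le> M"
  shows "\<bar>Y\<bar> < M"
  using assms by (auto simp: mult_less_0_iff)

theorem lemma1:
  fixes B :: "(real^2) set set" and R :: "(real^2) set" and a b :: "real^2"
  assumes "finite B"
    and "\<forall>S\<in>B. is_segment S"
    and "maximal_region (RB B) R"
    and "a \<noteq> b"
    and "R = closed_segment a b"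
  shows "R \<subseteq> \<Union>B"
proof (rule ccontr)
  assume "\<not> R \<subseteq> \<Union>B"
  then obtain x0 where x0: "x0 \<in> R" "x0 \<notin> \<Union>B" by auto
  have "\<forall>S\<in>B. \<exists>ab. S = closed_segment (fst ab) (snd ab)"
    using assms(2) unfolding is_segment_def by auto
  then obtain ab where ab: "\<forall>S\<in>B. S = closed_segment (fst (ab S)) (snd (ab S))"
    by metis
  define ep1 where "ep1 S = fst (ab S)" for S
  define ep2 where "ep2 S = snd (ab S)" for S
  have ep: "\<And>S. S \<in> B \<Longrightarrow> S = closed_segment (ep1 S) (ep2 S)"
    using ab by (simp add: ep1_def ep2_def)
  have closedK: "closed (\<Union>B)"
    using assms(1) ep by (metis closed_Union closed_segment)
  have mr: "\<forall>p\<in>R. \<exists>e>0. ball p e \<inter> R = ball p e \<inter> RB B"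
    using assms(3) unfolding maximal_region_def by auto
  have RP: "R \<subseteq> RB B"
  proof
    fix z assume "z \<in> R"
    then obtain e where "e > 0" "ball z e \<inter> R = ball z e \<inter> RB B" using mr by auto
    thus "z \<in> RB B" using \<open>z \<in> R\<close> by (metis IntD2 IntI centre_in_ball)
  qed
  obtain \<epsilon> where \<epsilon>: "\<epsilon> > 0" "ball x0 \<epsilon> \<inter> \<Union>B = {}"
  proof -
    have "open (- \<Union>B)" using closedK by auto
    then obtain e where "e > 0" "ball x0 e \<subseteq> - \<Union>B"
      using x0(2) open_contains_ball by blast
    thus ?thesis using that by blast
  qed
  have "x0 \<in> closure (open_segment a b)" using x0(1) assms(4,5) by simp
  then obtain p where p: "p \<in> open_segment a b" "dist p x0 < \<epsilon>"
    using \<epsilon>(1) closure_approachable by metis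
  have pK: "p \<notin> \<Union>B" 
  proof -
    have "p \<in> ball x0 \<epsilon>" using p(2) by (simp add: dist_commute)
    thus ?thesis using \<epsilon>(2) by blast
  qed
  obtain s where s: "0 < s" "s < 1" "p = (1 - s) *\<^sub>R a + s *\<^sub>R b"
    using p(1) by (auto simp: in_segment)
  define u where "u = b - a"
  define n where "n = perp u"
  have u0: "u \<noteq> 0" using assms(4) u_def by auto
  have uu: "u \<bullet> u > 0" using u0 by simp
  have nu: "n \<bullet> u = 0" "u \<bullet> n = 0" "n \<bullet> n = u \<bullet> u" using perp_inner n_def by auto
  have pu: "p = a + s *\<^sub>R u" using s(3) by (simp add: u_def algebra_simps)
  define X where "X v = ((v - p) \<bullet> u) / (u \<bullet> u)" for v
  define Y where "Y v = ((v - p) \<bullet> n) / (u \<bullet> u)" for v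
  have decomp: "v = p + X v *\<^sub>R u + Y v *\<^sub>R n" for v
  proof -
    have "(u \<bullet> u) *\<^sub>R (v - p) = ((v - p) \<bullet> u) *\<^sub>R u + ((v - p) \<bullet> n) *\<^sub>R n"
      using perp_decomp n_def by simp
    hence "(1 / (u \<bullet> u)) *\<^sub>R ((u \<bullet> u) *\<^sub>R (v - p)) = (1 / (u \<bullet> u)) *\<^sub>R (((v - p) \<bullet> u) *\<^sub>R u + ((v - p) \<bullet> n) *\<^sub>R n)"
      by simp
    hence "v - p = X v *\<^sub>R u + Y v *\<^sub>R n"
      using uu unfolding X_def Y_def by (simp add: scaleR_right_distrib)
    thus ?thesis by (simp add: algebra_simps)
  qed
  have Xlin: "X (z + c *\<^sub>R u) = X z + c" "Y (z + c *\<^sub>R u) = Y z"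
       "X (z + c *\<^sub>R n) = X z" "Y (z + c *\<^sub>R n) = Y z + c" for z c
    using uu nu unfolding X_def Y_def by (auto simp: inner_simps field_simps)
  have Xp: "X p = 0" "Y p = 0" by (auto simp: X_def Y_def)
  define G where "G \<alpha> \<beta> v = Y v - \<alpha> - \<beta> * X v" for \<alpha> \<beta> v
  define ok where "ok \<alpha> \<beta> \<longleftrightarrow> (\<forall>S\<in>B. G \<alpha> \<beta> (ep1 S) * G \<alpha> \<beta> (ep2 S) > 0)" for \<alpha> \<beta>
  have Gaff: "G \<alpha> \<beta> ((1-t) *\<^sub>R x + t *\<^sub>R y) = (1-t) * G \<alpha> \<beta> x + t * G \<alpha> \<beta> y" for \<alpha> \<beta> t x y
  proof -
    have e: "(1-t) *\<^sub>R x + t *\<^sub>R y - p = (1-t) *\<^sub>R (x - p) + t *\<^sub>R (y - p)"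
      by (simp add: algebra_simps)
    show ?thesis unfolding G_def X_def Y_def e using uu
      by (simp add: inner_add_left field_simps) (simp add: algebra_simps)
  qed
  have segG: "(\<exists>w\<in>S. G \<alpha> \<beta> w = 0) \<longleftrightarrow> G \<alpha> \<beta> (ep1 S) * G \<alpha> \<beta> (ep2 S) \<le> 0"
    if "S \<in> B" for S \<alpha> \<beta>
    using seg_zero_iff[of "G \<alpha> \<beta>" "ep1 S" "ep2 S"] Gaff ep[OF that] by auto
  have lemA: "\<exists>S\<in>B. G \<alpha> \<beta> (ep1 S) * G \<alpha> \<beta> (ep2 S) \<le> 0"
    if z: "z \<in> RB B" "Y z = \<alpha> + \<beta> * X z" for z \<alpha> \<beta>
  proof -
    define d where "d = u + \<beta> *\<^sub>R n"
    have "d \<bullet> u = u \<bullet> u" using nu by (simp add: d_def inner_simps)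
    hence "d \<noteq> 0" using uu by auto
    hence "line_meets (line_dir z d) B" using z(1) unfolding RB_def by auto
    then obtain S w t where S: "S \<in> B" "w \<in> S" "w = z + t *\<^sub>R d"
      unfolding line_meets_def line_dir_def by blast
    have w2: "w = (z + t *\<^sub>R u) + (t * \<beta>) *\<^sub>R n" using S(3) by (simp add: d_def algebra_simps)
    have "X w = X z + t" "Y w = Y z + t * \<beta>" unfolding w2 Xlin by simp_all
    hence "G \<alpha> \<beta> w = 0" using z(2) by (simp add: G_def algebra_simps)
    thus ?thesis using segG[OF S(1)] S by blast
  qed
  have pR: "p \<in> R" unfolding assms(5) in_segment
    using s by (intro exI[of _ s]) auto
  have lemB: "\<exists>\<beta>. ok (Y q) \<beta>" if q: "X q = 0" "q \<notin> RB B" for q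
  proof -
    from q(2) obtain d where d: "d \<noteq> 0" "\<not> line_meets (line_dir q d) B"
      unfolding RB_def by auto
    have qd: "q = p + Y q *\<^sub>R n" using decomp[of q] q(1) by simp
    have dd: "(u \<bullet> u) *\<^sub>R d = (d \<bullet> u) *\<^sub>R u + (d \<bullet> n) *\<^sub>R n"
      using perp_decomp n_def by simp
    show ?thesis
    proof (cases "d \<bullet> u = 0")
      case True
      have dn: "d \<bullet> n \<noteq> 0" using dd True d(1) uu by auto
      have "(- Y q * (u \<bullet> u) / (d \<bullet> n)) *\<^sub>R d = (- Y q / (d \<bullet> n)) *\<^sub>R ((u \<bullet> u) *\<^sub>R d)"
        by simp
      also have "\<dots> = (- Y q) *\<^sub>R n" using dd True dn by simp
      finally have pd: "p = q + (- Y q * (u \<bullet> u) / (d \<bullet> n)) *\<^sub>R d"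
        using qd by (simp add: algebra_simps)
      have "line_meets (line_dir p d) B" using RP pR d(1) unfolding RB_def by auto
      then obtain S w t where S: "S \<in> B" "w \<in> S" "w = p + t *\<^sub>R d"
        unfolding line_meets_def line_dir_def by blast
      have "w = q + (- Y q * (u \<bullet> u) / (d \<bullet> n) + t) *\<^sub>R d"
        using S(3) pd by (simp add: algebra_simps)
      hence "line_meets (line_dir q d) B" using S unfolding line_meets_def line_dir_def by blast
      thus ?thesis using d(2) by blast
    next
      case False
      define \<beta> where "\<beta> = (d \<bullet> n) / (d \<bullet> u)"
      have "ok (Y q) \<beta>" unfolding ok_def
      proof
        fix S assume S: "S \<in> B"
        show "G (Y q) \<beta> (ep1 S) * G (Y q) \<beta> (ep2 S) > 0"
        proof (rule ccontr)
          assume "\<not> ?thesis"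
          then obtain w where w: "w \<in> S" "G (Y q) \<beta> w = 0" using segG[OF S, of "Y q" \<beta>] by (auto simp: not_less)
          have e1: "Y w = Y q + \<beta> * X w" using w(2) by (simp add: G_def)
          have "(X w * (u \<bullet> u) / (d \<bullet> u)) *\<^sub>R d = (X w / (d \<bullet> u)) *\<^sub>R ((u \<bullet> u) *\<^sub>R d)"
            by simp
          also have "\<dots> = X w *\<^sub>R u + (X w * \<beta>) *\<^sub>R n"
            unfolding dd using False by (simp add: \<beta>_def scaleR_add_right)
          moreover have "q + (X w *\<^sub>R u + (X w * \<beta>) *\<^sub>R n) = p + X w *\<^sub>R u + (Y q + \<beta> * X w) *\<^sub>R n"
            using qd by (simp add: algebra_simps)
          moreover have "p + X w *\<^sub>R u + (Y q + \<beta> * X w) *\<^sub>R n = w"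
            using decomp[of w] e1 by simp
          ultimately have "w = q + (X w * (u \<bullet> u) / (d \<bullet> u)) *\<^sub>R d"
            by simp
          hence "line_meets (line_dir q d) B" using S w(1) unfolding line_meets_def line_dir_def by blast
          thus False using d(2) by blast
        qed
      qed
      thus ?thesis by blast
    qed
  qed
  obtain r1 where r1: "r1 > 0" "ball p r1 \<inter> R = ball p r1 \<inter> RB B" using mr pR by blast
  have nu0: "norm u > 0" using u0 by simp
  have nn: "norm n = norm u" using nu(3) by (simp add: norm_eq_sqrt_inner)
  define \<tau> where "\<tau> = min (r1 / norm u) (min s (1 - s))"
  have \<tau>0: "\<tau> > 0" using r1 nu0 s unfolding \<tau>_def by auto
  have inR: "p + c *\<^sub>R u \<in> RB B" if "\<bar>c\<bar> < \<tau>" for c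
  proof -
    have "p + c *\<^sub>R u \<in> R" unfolding assms(5) in_segment
      using that s unfolding \<tau>_def
      by (intro exI[of _ "s + c"]) (auto simp: pu u_def algebra_simps)
    moreover have "dist p (p + c *\<^sub>R u) < r1"
    proof -
      have "dist p (p + c *\<^sub>R u) = \<bar>c\<bar> * norm u" by (simp add: dist_norm)
      also have "\<dots> < (r1 / norm u) * norm u"
        using that nu0 unfolding \<tau>_def by (intro mult_strict_right_mono) auto
      finally show ?thesis using nu0 by simp
    qed
    ultimately have "p + c *\<^sub>R u \<in> ball p r1 \<inter> R" by simp
    hence "p + c *\<^sub>R u \<in> ball p r1 \<inter> RB B" by (simp only: r1(2))
    thus ?thesis by simp
  qed
  have F1: "\<not> ok 0 \<beta>" for \<beta>
    using lemA[of p 0 \<beta>] RP pR Xp unfolding ok_def by (auto simp: not_less)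
  have F2: "\<tau> * \<bar>\<beta>\<bar> \<le> \<bar>\<alpha>\<bar>" if "ok \<alpha> \<beta>" for \<alpha> \<beta>
  proof (rule ccontr)
    assume a: "\<not> ?thesis"
    hence b0: "\<beta> \<noteq> 0" by auto
    define c where "c = - \<alpha> / \<beta>"
    have "\<bar>c\<bar> < \<tau>" using a b0 unfolding c_def by (auto simp: abs_divide divide_simps mult.commute)
    hence zin: "p + c *\<^sub>R u \<in> RB B" by (rule inR)
    have "Y (p + c *\<^sub>R u) = \<alpha> + \<beta> * X (p + c *\<^sub>R u)"
      using Xlin(1,2)[of p c] Xp b0 by (simp add: c_def)
    from lemA[OF zin this] that show False unfolding ok_def by (auto simp: not_less)
  qed
  have Ron: "Y r = 0" if rR: "r \<in> R" for r
  proof -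
    obtain t where "r = (1 - t) *\<^sub>R a + t *\<^sub>R b" using rR unfolding assms(5) in_segment by blast
    hence "r = p + (t - s) *\<^sub>R u" by (simp add: pu u_def algebra_simps)
    thus ?thesis using Xlin(2)[of p "t - s"] Xp by simp
  qed
  have F3: "\<exists>\<beta>. ok h \<beta>" if "0 < \<bar>h\<bar>" "\<bar>h\<bar> < r1 / norm u" for h
  proof -
    define q where "q = p + h *\<^sub>R n"
    have Xq: "X q = 0" "Y q = h" using Xlin(3,4)[of p h] Xp by (simp_all add: q_def)
    have "q \<notin> RB B"
    proof
      assume qP: "q \<in> RB B"
      have "dist p q = \<bar>h\<bar> * norm u" by (simp add: q_def dist_norm nn)
      also have "\<dots> < (r1 / norm u) * norm u"
        using that nu0 by (intro mult_strict_right_mono) auto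
      finally have "q \<in> ball p r1" using nu0 by simp
      hence "q \<in> ball p r1 \<inter> RB B" using qP by simp
      hence "q \<in> ball p r1 \<inter> R" by (simp only: r1(2))
      hence "q \<in> R" by simp
      thus False using Ron Xq that by auto
    qed
    thus ?thesis using lemB[OF Xq(1)] Xq(2) by simp
  qed
  have F4: "open {\<beta>. ok h \<beta>}" for h
  proof -
    have "{\<beta>. ok h \<beta>} = (\<Inter>S\<in>B. {\<beta>. 0 < G h \<beta> (ep1 S) * G h \<beta> (ep2 S)})"
      by (auto simp: ok_def)
    moreover have "open {\<beta>. 0 < G h \<beta> (ep1 S) * G h \<beta> (ep2 S)}" for S
      by (rule open_Collect_less) (auto simp: G_def intro!: continuous_intros)
    ultimately show ?thesis using assms(1) by auto
  qed
  define E where "E = ep1 ` B \<union> ep2 ` B"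
  have finE: "finite E" using assms(1) by (simp add: E_def)
  define dd where "dd e = (if Y e = 0 then 1 else \<bar>Y e\<bar> / (1 + \<bar>X e\<bar> / \<tau>))" for e
  have pos1: "1 + \<bar>X e\<bar> / \<tau> > 0" for e using \<tau>0 by (simp add: add_pos_nonneg)
  have dd0: "dd e > 0" for e using pos1[of e] by (simp add: dd_def)
  define D where "D = Min (insert 1 (dd ` E))"
  have D0: "D > 0" using finE dd0 by (simp add: D_def)
  have DE: "D \<le> dd e" if "e \<in> E" for e using finE that by (simp add: D_def)
  define mm where "mm = min D (r1 / norm u)"
  define h where "h = mm / 2"
  have rpos: "r1 / norm u > 0" using r1(1) nu0 by simp
  have m1: "mm \<le> r1 / norm u" "mm \<le> D" "mm > 0"
    using D0 rpos unfolding mm_def by auto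
  have h0: "h > 0" using m1(3) unfolding h_def by simp
  have hm: "h < mm" using m1(3) unfolding h_def by simp
  have hr: "h < r1 / norm u" using hm m1(1) by linarith
  have hD: "h < D" using hm m1(2) by linarith
  have small: "h + h * \<bar>X e\<bar> / \<tau> < \<bar>Y e\<bar>" if "e \<in> E" "Y e \<noteq> 0" for e
  proof -
    have "h < \<bar>Y e\<bar> / (1 + \<bar>X e\<bar> / \<tau>)" using hD DE[OF that(1)] that(2) by (simp add: dd_def)
    hence "h * (1 + \<bar>X e\<bar> / \<tau>) < \<bar>Y e\<bar>" using pos1[of e] by (simp add: pos_less_divide_eq)
    thus ?thesis by (simp add: algebra_simps)
  qed
  obtain \<beta>p where bp: "ok h \<beta>p" using F3[of h] h0 hr by auto
  obtain \<beta>m where bm: "ok (- h) \<beta>m" using F3[of "- h"] h0 hr by auto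
  obtain \<beta>q where bq: "ok h \<beta>q" "\<beta>q + \<beta>m \<noteq> 0"
  proof (cases "\<beta>p + \<beta>m = 0")
    case False thus ?thesis using that bp by blast
  next
    case True
    obtain \<epsilon>' where e': "\<epsilon>' > 0" "ball \<beta>p \<epsilon>' \<subseteq> {\<beta>. ok h \<beta>}"
      using F4[of h] bp open_contains_ball by blast
    have "\<beta>p + \<epsilon>' / 2 \<in> ball \<beta>p \<epsilon>'" using e'(1) by (simp add: dist_real_def)
    hence "ok h (\<beta>p + \<epsilon>' / 2)" using e'(2) by blast
    moreover have "\<beta>p + \<epsilon>' / 2 + \<beta>m \<noteq> 0" using True e'(1) by simp
    ultimately show ?thesis using that by blast
  qed
  define bs where "bs = (\<beta>q + \<beta>m) / 2"
  have bs0: "bs \<noteq> 0" using bq(2) by (simp add: bs_def)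
  obtain S where S: "S \<in> B" "G 0 bs (ep1 S) * G 0 bs (ep2 S) \<le> 0"
    using F1[of bs] unfolding ok_def by (auto simp: not_less)
  have Gmid: "G 0 bs v = (G h \<beta>q v + G (- h) \<beta>m v) / 2" for v
    by (simp add: G_def bs_def field_simps)
  have A: "G h \<beta>q (ep1 S) * G h \<beta>q (ep2 S) > 0" using bq(1) S(1) by (simp add: ok_def)
  have Bm: "G (- h) \<beta>m (ep1 S) * G (- h) \<beta>m (ep2 S) > 0" using bm S(1) by (simp add: ok_def)
  have mid: "(G h \<beta>q (ep1 S) + G (- h) \<beta>m (ep1 S)) * (G h \<beta>q (ep2 S) + G (- h) \<beta>m (ep2 S)) \<le> 0"
  proof -
    have "(G h \<beta>q (ep1 S) + G (- h) \<beta>m (ep1 S)) * (G h \<beta>q (ep2 S) + G (- h) \<beta>m (ep2 S))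
        = 4 * (G 0 bs (ep1 S) * G 0 bs (ep2 S))" unfolding Gmid by simp
    thus ?thesis using S(2) by simp
  qed
  have s1: "G h \<beta>q (ep1 S) * G (- h) \<beta>m (ep1 S) < 0"
    by (rule sign_lemma[OF A Bm mid])
  have s2: "G h \<beta>q (ep2 S) * G (- h) \<beta>m (ep2 S) < 0"
    by (rule sign_lemma) (use A Bm mid in \<open>simp_all add: mult.commute\<close>)
  have bqb: "\<bar>\<beta>q\<bar> \<le> h / \<tau>" using F2[OF bq(1)] h0 \<tau>0 by (simp add: pos_le_divide_eq mult.commute)
  have bmb: "\<bar>\<beta>m\<bar> \<le> h / \<tau>" using F2[OF bm] h0 \<tau>0 by (simp add: pos_le_divide_eq mult.commute)
  have Y0: "Y v = 0" if v: "v \<in> E" "G h \<beta>q v * G (- h) \<beta>m v < 0" for v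
  proof (rule ccontr)
    assume Yv: "Y v \<noteq> 0"
    have pr: "\<bar>\<beta>\<bar> * \<bar>X v\<bar> \<le> h * \<bar>X v\<bar> / \<tau>" if "\<bar>\<beta>\<bar> \<le> h / \<tau>" for \<beta>
      using mult_right_mono[OF that, of "\<bar>X v\<bar>"] by simp
    have c1: "\<bar>h + \<beta>q * X v\<bar> \<le> h + h * \<bar>X v\<bar> / \<tau>"
      using pr[OF bqb] h0 abs_triangle_ineq[of h "\<beta>q * X v"] by (simp add: abs_mult)
    have c2: "\<bar>- h + \<beta>m * X v\<bar> \<le> h + h * \<bar>X v\<bar> / \<tau>"
      using pr[OF bmb] h0 abs_triangle_ineq[of "- h" "\<beta>m * X v"] by (simp add: abs_mult)
    have "(Y v - (h + \<beta>q * X v)) * (Y v - (- h + \<beta>m * X v)) < 0"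
      using v(2) by (simp add: G_def algebra_simps)
    from between_lemma[OF this c1 c2] small[OF v(1) Yv] show False by simp
  qed
  define x1 where "x1 = X (ep1 S)"
  define x2 where "x2 = X (ep2 S)"
  have Y1: "Y (ep1 S) = 0" using Y0[OF _ s1] S(1) by (simp add: E_def)
  have Y2: "Y (ep2 S) = 0" using Y0[OF _ s2] S(1) by (simp add: E_def)
  have e1p: "ep1 S = p + x1 *\<^sub>R u" using decomp[of "ep1 S"] Y1 by (simp add: x1_def)
  have e2p: "ep2 S = p + x2 *\<^sub>R u" using decomp[of "ep2 S"] Y2 by (simp add: x2_def)
  have "(bs * bs) * (x1 * x2) \<le> 0"
    using S(2) Y1 Y2 by (simp add: G_def x1_def x2_def algebra_simps)
  hence x12: "x1 * x2 \<le> 0"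
  proof -
    assume a: "(bs * bs) * (x1 * x2) \<le> 0"
    show ?thesis
    proof (rule ccontr)
      assume "\<not> x1 * x2 \<le> 0"
      moreover have "bs * bs > 0" using bs0 not_real_square_gt_zero by blast
      ultimately have "(bs * bs) * (x1 * x2) > 0" by (simp add: mult_pos_pos)
      thus False using a by simp
    qed
  qed
  have "p \<in> closed_segment (ep1 S) (ep2 S)"
  proof (cases "x1 = x2")
    case True
    hence "x1 * x1 \<le> 0" using x12 by simp
    hence "x1 * x1 = 0" using zero_le_square[of x1] by linarith
    hence "x1 = 0" by simp
    thus ?thesis using e1p by simp
  next
    case False
    define t where "t = x1 / (x1 - x2)"
    have d: "x1 - x2 \<noteq> 0" using False by simp
    have "0 \<le> t \<and> t \<le> 1"
      using x12 d unfolding t_def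
      by (auto simp: mult_le_0_iff divide_simps split: if_splits)
    moreover have "(1 - t) * x1 + t * x2 = 0"
      using d unfolding t_def by (simp add: field_simps)
    moreover have "(1 - t) *\<^sub>R ep1 S + t *\<^sub>R ep2 S = p + ((1 - t) * x1 + t * x2) *\<^sub>R u"
      unfolding e1p e2p by (simp add: algebra_simps)
    ultimately show ?thesis unfolding in_segment by (intro exI[of _ t]) simp
  qed
  hence "p \<in> \<Union>B" using ep[OF S(1)] S(1) by blast
  thus False using pK by simp
qed

end
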